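(* Let $\|\cdot\|$ be a norm on $\mathbb{R}^d$ and $\Phi$ a mirror map whose Bregman divergence satisfies $\frac{m}{2}\|x-y\|^2\le D_\Phi(x,y)\le\frac{M}{2}\|x-y\|^2$ for all $x,y$, with $0<m\le M$; let $\kappa=M/m$. Consider Primal Online Balanced Descent with parameter $\beta>0$, norm $\|\cdot\|$ and mirror map $\Phi$, at round $t$, producing $x_t$ from $x_{t-1}$ and convex cost function $f_t$ with minimizer $v_t$. Let $x_t^*$ be a point with $H_t^*=f_t(x_t^* )<H_t=f_t(x_t)$, and suppose $f_t(x)\ge\alpha\|x-v_t\|$ for all $x$, where $\alpha>0$. Then $$\|x_t-x_t^*\|-\|x_t^*-x_{t-1}\|\le-\gamma\|x_t-x_{t-1}\|,\qquad\text{where }\gamma=\frac{1}{\sqrt{\kappa}}\sqrt{1+\left(\tfrac{2}{\alpha\beta}\right)^2}-\tfrac{2}{\alpha\beta}.$$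
   Context: $D_\Phi(x,y)=\Phi(x)-\Phi(y)-\nabla\Phi(y)^T(x-y)$; $\Pi^\Phi_K(x)=\arg\min_{y\in K}D_\Phi(y,x)$. Primal Online Balanced Descent with parameter $\beta>0$: given $x_{t-1}$ and $f_t$, let $v_t=\arg\min_x f_t(x)$; if $\|x_{t-1}-v_t\|<\beta f_t(v_t)$ set $x_t=v_t$; otherwise, with $K^l_t=\{x:f_t(x)\le l\}$ and $x(l)=\Pi^\Phi_{K^l_t}(x_{t-1})$, increase $l$ until $\|x(l)-x_{t-1}\|=\beta l$ and set $x_t=x(l)$. *)

theory Defs
  imports "HOL-Analysis.Analysis"
begin

definition is_norm :: "(real^'d \<Rightarrow> real) \<Rightarrow> bool" where
  "is_norm N \<longleftrightarrow>
     (\<forall>x. N x = 0 \<longleftrightarrow> x = 0) \<and>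
     (\<forall>c x. N (c *\<^sub>R x) = \<bar>c\<bar> * N x) \<and>
     (\<forall>x y. N (x + y) \<le> N x + N y)"

definition bregman :: "(real^'d \<Rightarrow> real) \<Rightarrow> (real^'d \<Rightarrow> real^'d) \<Rightarrow> real^'d \<Rightarrow> real^'d \<Rightarrow> real" where
  "bregman Phi gPhi x y = Phi x - Phi y - gPhi y \<bullet> (x - y)"

definition is_bregman_proj ::
  "(real^'d \<Rightarrow> real) \<Rightarrow> (real^'d \<Rightarrow> real^'d) \<Rightarrow> (real^'d) set \<Rightarrow> real^'d \<Rightarrow> real^'d \<Rightarrow> bool" where
  "is_bregman_proj Phi gPhi K x p \<longleftrightarrow>
     p \<in> K \<and> (\<forall>y\<in>K. bregman Phi gPhi p x \<le> bregman Phi gPhi y x)"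

definition pobd_step ::
  "(real^'d \<Rightarrow> real) \<Rightarrow> (real^'d \<Rightarrow> real) \<Rightarrow> (real^'d \<Rightarrow> real^'d) \<Rightarrow> real
   \<Rightarrow> (real^'d \<Rightarrow> real) \<Rightarrow> real^'d \<Rightarrow> real^'d \<Rightarrow> real^'d \<Rightarrow> bool" where
  "pobd_step N Phi gPhi \<beta> f v xprev xt \<longleftrightarrow>
     (N (xprev - v) < \<beta> * f v \<and> xt = v) \<or>
     (\<not> N (xprev - v) < \<beta> * f v \<and>
      (\<exists>l. is_bregman_proj Phi gPhi {x. f x \<le> l} xprev xt \<and> N (xt - xprev) = \<beta> * l))"

end

theory Submission
  imports Defs
begin

lemma alg_main:
  fixes a b c k r :: real
  assumes a0: "a \<ge> 0" and b0: "b \<ge> 0" and r0: "0 < r" and r1: "r \<le> 1" and k0: "k \<ge> 0"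
    and ak: "a \<le> k * b" and c: "c \<ge> r * sqrt (a\<^sup>2 + b\<^sup>2)"
  shows "a - c \<le> - (r * sqrt (1 + k\<^sup>2) - k) * b"
proof -
  define S where "S = sqrt (a\<^sup>2 + b\<^sup>2)"
  define T where "T = sqrt ((k*b)\<^sup>2 + b\<^sup>2)"
  have T: "sqrt (1 + k\<^sup>2) * b = T"
  proof -
    have "(k*b)\<^sup>2 + b\<^sup>2 = b\<^sup>2 * (1 + k\<^sup>2)" by (simp add: algebra_simps power2_eq_square)
    then show ?thesis unfolding T_def using b0 by (simp add: real_sqrt_mult)
  qed
  have S0: "S \<ge> 0" "T \<ge> 0" unfolding S_def T_def by auto
  have aS: "a \<le> S" unfolding S_def by (rule real_le_rsqrt) simp
  have kT: "k*b \<le> T" unfolding T_def by (rule real_le_rsqrt) simp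
  have ST: "S \<le> T" unfolding S_def T_def
    using ak a0 by (intro real_sqrt_le_mono add_right_mono power_mono) auto
  have sq: "S\<^sup>2 = a\<^sup>2 + b\<^sup>2" "T\<^sup>2 = (k*b)\<^sup>2 + b\<^sup>2" unfolding S_def T_def by auto
  have "(T - S) * (T + S) = (k*b - a) * (k*b + a)"
    using sq by (simp add: algebra_simps power2_eq_square)
  also have "\<dots> \<le> (k*b - a) * (T + S)"
    using ak aS kT by (intro mult_left_mono) auto
  finally have "T - S \<le> k*b - a"
  proof (cases "T + S = 0")
    case True then show ?thesis using S0 ak by auto
  next
    case False
    then have "T + S > 0" using S0 by auto
    moreover assume "(T - S) * (T + S) \<le> (k * b - a) * (T + S)"
    ultimately show ?thesis by (simp add: mult_le_cancel_right)
  qed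
  then have "r * (T - S) \<le> k*b - a"
  proof -
    have "r * (T - S) \<le> 1 * (T - S)" using r1 ST by (intro mult_right_mono) auto
    then show ?thesis using \<open>T - S \<le> k*b - a\<close> by simp
  qed
  then have X: "r*T - r*S \<le> k*b - a" by (simp add: right_diff_distrib)
  have E: "- (r * sqrt (1 + k\<^sup>2) - k) * b = k*b - r * T"
    unfolding T[symmetric] by (simp add: algebra_simps)
  show ?thesis using c X unfolding E S_def[symmetric] by linarith
qed

theorem lemma14:
  fixes N Phi f :: "real^'d \<Rightarrow> real"
    and gPhi :: "real^'d \<Rightarrow> real^'d"
    and m M \<alpha> \<beta> :: real
    and xprev xt xstar v :: "real^'d"
  assumes norm: "is_norm N"
    and grad: "\<forall>y. (Phi has_derivative (\<lambda>h. gPhi y \<bullet> h)) (at y)"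
    and Phi_convex: "convex_on UNIV Phi"
    and m_pos: "0 < m" and mM: "m \<le> M"
    and breg_bounds: "\<forall>x y. m / 2 * (N (x - y))\<^sup>2 \<le> bregman Phi gPhi x y
                          \<and> bregman Phi gPhi x y \<le> M / 2 * (N (x - y))\<^sup>2"
    and beta_pos: "0 < \<beta>"
    and f_convex: "convex_on UNIV f"
    and v_min: "\<forall>x. f v \<le> f x"
    and step: "pobd_step N Phi gPhi \<beta> f v xprev xt"
    and star: "f xstar < f xt"
    and alpha_pos: "0 < \<alpha>"
    and growth: "\<forall>x. f x \<ge> \<alpha> * N (x - v)"
  shows "N (xt - xstar) - N (xstar - xprev)
           \<le> - ((1 / sqrt (M / m)) * sqrt (1 + (2 / (\<alpha> * \<beta>))\<^sup>2) - 2 / (\<alpha> * \<beta>))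
               * N (xt - xprev)"
proof -
  have Nz: "N 0 = 0" using norm unfolding is_norm_def by auto
  have Nhom: "\<And>c x. N (c *\<^sub>R x) = \<bar>c\<bar> * N x" using norm unfolding is_norm_def by auto
  have Ntri: "\<And>x y. N (x + y) \<le> N x + N y" using norm unfolding is_norm_def by auto
  have Nneg: "\<And>x. N (- x) = N x" using Nhom[of "-1"] by simp
  have Nsym: "\<And>x y. N (x - y) = N (y - x)" by (metis Nneg minus_diff_eq)
  have Nge: "\<And>x. N x \<ge> 0"
  proof -
    fix x
    have "N (x + - x) \<le> N x + N (- x)" by (rule Ntri)
    then show "N x \<ge> 0" using Nz Nneg by simp
  qed
  have notv: "xt \<noteq> v" using star v_min by (metis not_le)
  then obtain l where proj: "is_bregman_proj Phi gPhi {x. f x \<le> l} xprev xt"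
    and bl: "N (xt - xprev) = \<beta> * l"
    using step unfolding pobd_step_def by auto
  let ?D = "bregman Phi gPhi"
  let ?K = "{x. f x \<le> l}"
  have xtK: "f xt \<le> l" and pmin: "\<And>y. f y \<le> l \<Longrightarrow> ?D xt xprev \<le> ?D y xprev"
    using proj unfolding is_bregman_proj_def by auto
  have fstar: "f xstar \<le> l" using star xtK by simp
  have three: "\<And>y x p. ?D y x = ?D y p + ?D p x + (gPhi p - gPhi x) \<bullet> (y - p)"
    unfolding bregman_def by (simp add: algebra_simps inner_diff_left inner_diff_right)
  define g where "g = (gPhi xt - gPhi xprev) \<bullet> (xstar - xt)"
  have g0: "g \<ge> 0"
  proof (rule ccontr)
    assume "\<not> g \<ge> 0"
    then have gn: "g < 0" by simp
    define n where "n = N (xstar - xt)"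
    have n0: "n \<ge> 0" using Nge n_def by simp
    have Mpos: "M > 0" using m_pos mM by simp
    define s where "s = min 1 (- g / (M * (n\<^sup>2 + 1)))"
    have s0: "0 < s" "s \<le> 1" using gn Mpos unfolding s_def by (auto simp: field_simps add_pos_nonneg)
    define y where "y = xt + s *\<^sub>R (xstar - xt)"
    have "y = (1 - s) *\<^sub>R xt + s *\<^sub>R xstar" unfolding y_def by (simp add: algebra_simps)
    then have "f y \<le> (1 - s) * f xt + s * f xstar"
      using convex_onD[OF f_convex, of s xt xstar] s0 by simp
    also have "\<dots> \<le> (1 - s) * l + s * l"
      using s0 xtK fstar by (intro add_mono mult_left_mono) auto
    finally have "f y \<le> l" by (simp add: algebra_simps)
    then have "?D xt xprev \<le> ?D y xprev" by (rule pmin)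
    also have "\<dots> = ?D y xt + ?D xt xprev + s * g"
      using three[of y xprev xt] unfolding g_def y_def by (simp add: inner_scaleR_right)
    finally have A: "0 \<le> ?D y xt + s * g" by simp
    have "?D y xt \<le> M / 2 * (N (y - xt))\<^sup>2" using breg_bounds by blast
    also have "N (y - xt) = s * n" unfolding y_def n_def using Nhom s0 by simp
    finally have "0 \<le> M / 2 * (s * n)\<^sup>2 + s * g" using A by simp
    then have "0 \<le> s * (M / 2 * s * n\<^sup>2 + g)" by (simp add: algebra_simps power2_eq_square)
    then have B: "0 \<le> M / 2 * s * n\<^sup>2 + g" using s0 by (simp add: zero_le_mult_iff)
    have "s * (M * (n\<^sup>2 + 1)) \<le> - g"
      using Mpos n0 unfolding s_def
      by (smt (verit, best) divide_le_eq min.cobounded2 mult.commute mult_pos_pos pos_le_divide_eq zero_le_power2)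
    moreover have "M / 2 * s * n\<^sup>2 \<le> s * (M * (n\<^sup>2 + 1)) / 2"
      using s0 Mpos by (simp add: algebra_simps)
    ultimately show False using B gn by linarith
  qed
  have pyth: "?D xstar xprev \<ge> ?D xstar xt + ?D xt xprev"
    using three[of xstar xprev xt] g0 unfolding g_def by simp
  define a where "a = N (xt - xstar)"
  define b where "b = N (xt - xprev)"
  define c where "c = N (xstar - xprev)"
  define k where "k = 2 / (\<alpha> * \<beta>)"
  have abc0: "a \<ge> 0" "b \<ge> 0" "c \<ge> 0" unfolding a_def b_def c_def using Nge by auto
  have "M / 2 * c\<^sup>2 \<ge> m / 2 * a\<^sup>2 + m / 2 * b\<^sup>2"
    using pyth breg_bounds[rule_format, of xstar xprev] breg_bounds[rule_format, of xstar xt]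
      breg_bounds[rule_format, of xt xprev]
    unfolding a_def b_def c_def Nsym[of xt xstar] by linarith
  then have cM: "M * c\<^sup>2 \<ge> m * (a\<^sup>2 + b\<^sup>2)" by (simp add: algebra_simps)
  have "c\<^sup>2 \<ge> (m / M) * (a\<^sup>2 + b\<^sup>2)"
    using cM m_pos mM by (simp add: field_simps)
  then have "sqrt (m / M) * sqrt (a\<^sup>2 + b\<^sup>2) \<le> c"
    using abc0 by (metis real_sqrt_le_mono real_sqrt_mult real_sqrt_abs abs_of_nonneg)
  moreover have "a \<le> k * b"
  proof -
    have "a \<le> N (xt - v) + N (v - xstar)" unfolding a_def using Ntri[of "xt - v" "v - xstar"] by simp
    also have "\<dots> = N (xt - v) + N (xstar - v)" using Nsym by simp
    also have "\<dots> \<le> f xt / \<alpha> + f xstar / \<alpha>"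
      using growth alpha_pos by (intro add_mono) (auto simp: field_simps mult.commute)
    also have "\<dots> = (f xt + f xstar) / \<alpha>" by (simp add: add_divide_distrib)
    also have "\<dots> \<le> (2 * l) / \<alpha>" using xtK fstar alpha_pos by (intro divide_right_mono) auto
    also have "\<dots> = k * b" unfolding k_def b_def bl using beta_pos by simp
    finally show ?thesis .
  qed
  moreover have "sqrt (m / M) > 0" "sqrt (m / M) \<le> 1" using m_pos mM by auto
  moreover have "k \<ge> 0" unfolding k_def using alpha_pos beta_pos by simp
  ultimately have "a - c \<le> - (sqrt (m / M) * sqrt (1 + k\<^sup>2) - k) * b"
    using alg_main abc0 by blast
  moreover have "1 / sqrt (M / m) = sqrt (m / M)" by (simp add: real_sqrt_divide)
  ultimately show ?thesis unfolding a_def b_def c_def k_def by simp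
qed

end
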